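(* Let $N\ge1$ and let $(A_N,H_N,D_N)$ be the fuzzy sphere spectral triple described in the context, with space of two-forms $\Omega^2(A_N)=\mathcal{S}/J^2$. Then $$\Omega^2(A_N)=\{X\otimes_{\mathbb{C}}\sigma_1\sigma_2+Y\otimes_{\mathbb{C}}\sigma_2\sigma_3+Z\otimes_{\mathbb{C}}\sigma_1\sigma_3:\ X,Y,Z\in A_N\},$$ in the sense that the quotient map $\mathcal{S}\to\Omega^2(A_N)$ restricts to a bijection from this subspace of $A_N\otimes_{\mathbb{C}}M_2(\mathbb{C})$ onto $\Omega^2(A_N)$.
   Context: Let $J_1,J_2,J_3$ be a basis of $su(2)$ with $[J_k,J_l]=\sum_m\epsilon_{klm}J_m$ ($\epsilon_{123}=1$). $\rho_{n/2}$ is the $(n+1)$-dimensional irreducible unitary representation of $su(2)$. $K_N=\oplus_{n=0}^N\mathbb{C}^{n+1}$, $X_k=\oplus_{n=0}^N\rho_{n/2}(J_k)$, $A_N=B(K_N)$, $H_N=K_N\otimes\mathbb{C}^2$ with $a\mapsto a\otimes1$; $\tau_k$ the Pauli matrices, $\sigma_k=\sqrt{-1}\tau_k$, $D_N=\sum_kX_k\otimes\sigma_k$; $B(H_N)=A_N\otimes M_2(\mathbb{C})$. The differential calculus of the spectral triple: $\Omega^1(A_N)=\{\sum_ja_j[D_N,b_j]\}$, $\mathcal{S}$ is the linear span of all products $a_0[D_N,a_1][D_N,a_2]$ ($a_i\in A_N$), $J^2=\{\sum_j[D_N,a_j][D_N,b_j]:\sum_ja_j[D_N,b_j]=0\}$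 (junk forms), and $\Omega^2(A_N)=\mathcal{S}/J^2$. *)

theory Defs
  imports Complex_Main "HOL-Library.Function_Algebras"
begin

text \<open>Linear operators on a finite-dimensional space with orthonormal basis indexed by a
finite set I are represented as matrices, i.e. functions  I => I => complex  (entries outside
I x I are zero).\<close>

type_synonym 'i mop = "'i \<Rightarrow> 'i \<Rightarrow> complex"

definition mmul :: "'i set \<Rightarrow> 'i mop \<Rightarrow> 'i mop \<Rightarrow> 'i mop" where
  "mmul I A B = (\<lambda>x y. \<Sum>z\<in>I. A x z * B z y)"

definition scal :: "complex \<Rightarrow> 'i mop \<Rightarrow> 'i mop" where
  "scal c A = (\<lambda>x y. c * A x y)"

text \<open>Basis of K_N = direct sum over n = 0..N of C^(n+1): pairs (n,i), 0 <= i <= n.\<close>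
definition KI :: "nat \<Rightarrow> (nat \<times> nat) set" where
  "KI N = {(n, i). n \<le> N \<and> i \<le> n}"

text \<open>Basis of H_N = K_N (x) C^2.\<close>
definition HI :: "nat \<Rightarrow> ((nat \<times> nat) \<times> nat) set" where
  "HI N = KI N \<times> {0, 1}"

text \<open>A_N = B(K_N).\<close>
definition AN :: "nat \<Rightarrow> (nat \<times> nat) mop set" where
  "AN N = {A. \<forall>x y. A x y \<noteq> 0 \<longrightarrow> x \<in> KI N \<and> y \<in> KI N}"

text \<open>Spin n/2 irreducible unitary representation of su(2) on C^(n+1), basis index
i = 0..n corresponding to magnetic number m = i - n/2.  With L_z = diag(m),
L_+ e_i = sqrt((i+1)(n-i)) e_(i+1), we put rho(J_k) = -i L_k; these are anti-Hermitian
and satisfy [J_k, J_l] = eps_klm J_m.\<close>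
definition cc :: "nat \<Rightarrow> nat \<Rightarrow> complex" where
  "cc n i = complex_of_real (sqrt (real ((i + 1) * (n - i))))"

definition rho :: "nat \<Rightarrow> nat \<Rightarrow> nat mop" where
  "rho n k = (\<lambda>a b.
     if a \<le> n \<and> b \<le> n then
       (if k = 1 then
          (if a = b + 1 then - \<i> * cc n b / 2 else if b = a + 1 then - \<i> * cc n a / 2 else 0)
        else if k = 2 then
          (if a = b + 1 then - cc n b / 2 else if b = a + 1 then cc n a / 2 else 0)
        else if k = 3 then
          (if a = b then - \<i> * complex_of_real (real a - real n / 2) else 0)
        else 0)
     else 0)"

text \<open>X_k = direct sum over n = 0..N of rho_(n/2)(J_k).\<close>
definition XN :: "nat \<Rightarrow> nat \<Rightarrow> (nat \<times> nat) mop" where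
  "XN N k = (\<lambda>(n, i) (m, j). if n = m \<and> n \<le> N then rho n k i j else 0)"

definition tau :: "nat \<Rightarrow> nat mop" where
  "tau k = (\<lambda>s t.
     if s \<le> 1 \<and> t \<le> 1 then
       (if k = 1 then (if s \<noteq> t then 1 else 0)
        else if k = 2 then (if s = 0 \<and> t = 1 then - \<i> else if s = 1 \<and> t = 0 then \<i> else 0)
        else if k = 3 then (if s = t then (if s = 0 then 1 else -1) else 0)
        else 0)
     else 0)"

definition sigma :: "nat \<Rightarrow> nat mop" where
  "sigma k = scal \<i> (tau k)"

definition one2 :: "nat mop" where
  "one2 = (\<lambda>s t. if s = t \<and> s \<le> 1 then 1 else 0)"

definition tensor :: "'i mop \<Rightarrow> nat mop \<Rightarrow> ('i \<times> nat) mop" where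
  "tensor A M = (\<lambda>(x, s) (y, t). A x y * M s t)"

definition emb :: "(nat \<times> nat) mop \<Rightarrow> ((nat \<times> nat) \<times> nat) mop" where
  "emb a = tensor a one2"

definition DN :: "nat \<Rightarrow> ((nat \<times> nat) \<times> nat) mop" where
  "DN N = (\<Sum>k\<in>{1, 2, 3}. tensor (XN N k) (sigma k))"

definition dD :: "nat \<Rightarrow> (nat \<times> nat) mop \<Rightarrow> ((nat \<times> nat) \<times> nat) mop" where
  "dD N a = mmul (HI N) (DN N) (emb a) - mmul (HI N) (emb a) (DN N)"

text \<open>S: linear span of all a0 [D,a1] [D,a2], written as finite linear combinations.\<close>
definition SN :: "nat \<Rightarrow> ((nat \<times> nat) \<times> nat) mop set" where
  "SN N = {\<omega>. \<exists>ts :: (complex \<times> (nat \<times> nat) mop \<times> (nat \<times> nat) mop \<times> (nat \<times> nat) mop) list.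
      (\<forall>(c, a0, a1, a2) \<in> set ts. a0 \<in> AN N \<and> a1 \<in> AN N \<and> a2 \<in> AN N) \<and>
      \<omega> = sum_list (map (\<lambda>(c, a0, a1, a2).
             scal c (mmul (HI N) (mmul (HI N) (emb a0) (dD N a1)) (dD N a2))) ts)}"

definition J2 :: "nat \<Rightarrow> ((nat \<times> nat) \<times> nat) mop set" where
  "J2 N = {\<omega>. \<exists>ps :: ((nat \<times> nat) mop \<times> (nat \<times> nat) mop) list.
      (\<forall>(a, b) \<in> set ps. a \<in> AN N \<and> b \<in> AN N) \<and>
      sum_list (map (\<lambda>(a, b). mmul (HI N) (emb a) (dD N b)) ps) = 0 \<and>
      \<omega> = sum_list (map (\<lambda>(a, b). mmul (HI N) (dD N a) (dD N b)) ps)}"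

text \<open>The quotient map S -> S/J^2, s |-> s + J^2, and Omega^2 = S/J^2 (set of cosets).\<close>
definition qmap :: "nat \<Rightarrow> ((nat \<times> nat) \<times> nat) mop \<Rightarrow> ((nat \<times> nat) \<times> nat) mop set" where
  "qmap N s = (\<lambda>j. s + j) ` J2 N"

definition Omega2 :: "nat \<Rightarrow> ((nat \<times> nat) \<times> nat) mop set set" where
  "Omega2 N = qmap N ` SN N"

definition WN :: "nat \<Rightarrow> ((nat \<times> nat) \<times> nat) mop set" where
  "WN N = {tensor X (mmul {0, 1} (sigma 1) (sigma 2))
           + tensor Y (mmul {0, 1} (sigma 2) (sigma 3))
           + tensor Z (mmul {0, 1} (sigma 1) (sigma 3)) | X Y Z.
           X \<in> AN N \<and> Y \<in> AN N \<and> Z \<in> AN N}"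

end

theory Submission
  imports Defs
begin

section \<open>Generic matrix algebra\<close>

lemma mmul_apply: "mmul I A B x y = (\<Sum>z\<in>I. A x z * B z y)"
  by (simp add: mmul_def)

lemma mmul_assoc: "finite I \<Longrightarrow> mmul I (mmul I A B) C = mmul I A (mmul I B C)"
proof -
  assume I: "finite I"
  show ?thesis
  proof (intro ext)
    fix x y
    have "mmul I (mmul I A B) C x y = (\<Sum>w\<in>I. \<Sum>z\<in>I. A x z * B z w * C w y)"
      by (simp add: mmul_def sum_distrib_right)
    also have "\<dots> = (\<Sum>z\<in>I. \<Sum>w\<in>I. A x z * B z w * C w y)"
      by (rule sum.swap)
    also have "\<dots> = mmul I A (mmul I B C) x y"
      by (simp add: mmul_def sum_distrib_left mult.assoc)
    finally show "mmul I (mmul I A B) C x y = mmul I A (mmul I B C) x y" .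
  qed
qed

lemma mmul_add_left: "mmul I (A + B) C = mmul I A C + mmul I B C"
  by (simp add: mmul_def fun_eq_iff distrib_right sum.distrib)
lemma mmul_add_right: "mmul I A (B + C) = mmul I A B + mmul I A C"
  by (simp add: mmul_def fun_eq_iff distrib_left sum.distrib)
lemma mmul_diff_left: "mmul I (A - B) C = mmul I A C - mmul I B C"
  by (simp add: mmul_def fun_eq_iff left_diff_distrib sum_subtractf)
lemma mmul_diff_right: "mmul I A (B - C) = mmul I A B - mmul I A C"
  by (simp add: mmul_def fun_eq_iff right_diff_distrib sum_subtractf)
lemma mmul_minus_left: "mmul I (- A) C = - mmul I A C"
  by (simp add: mmul_def fun_eq_iff sum_negf)
lemma mmul_minus_right: "mmul I A (- C) = - mmul I A C"
  by (simp add: mmul_def fun_eq_iff sum_negf)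
lemma mmul_zero_left: "mmul I 0 C = 0"
  by (simp add: mmul_def fun_eq_iff)
lemma mmul_zero_right: "mmul I A 0 = 0"
  by (simp add: mmul_def fun_eq_iff)
lemma mmul_scal_left: "mmul I (scal c A) C = scal c (mmul I A C)"
  by (simp add: mmul_def scal_def fun_eq_iff sum_distrib_left mult.assoc)
lemma mmul_scal_right: "mmul I A (scal c C) = scal c (mmul I A C)"
  by (simp add: mmul_def scal_def fun_eq_iff sum_distrib_left mult_ac)

lemmas mmul_lin = mmul_add_left mmul_add_right mmul_diff_left mmul_diff_right
  mmul_minus_left mmul_minus_right mmul_zero_left mmul_zero_right mmul_scal_left mmul_scal_right

lemma scal_add: "scal c (A + B) = scal c A + scal c B"
  by (simp add: scal_def fun_eq_iff distrib_left)
lemma scal_diff: "scal c (A - B) = scal c A - scal c B"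
  by (simp add: scal_def fun_eq_iff right_diff_distrib)
lemma scal_minus: "scal c (- A) = - scal c A"
  by (simp add: scal_def fun_eq_iff)
lemma scal_zero: "scal c 0 = 0"
  by (simp add: scal_def fun_eq_iff)
lemma scal_0: "scal 0 A = 0"
  by (simp add: scal_def fun_eq_iff)
lemma scal_1: "scal 1 A = A"
  by (simp add: scal_def fun_eq_iff)
lemma scal_scal: "scal a (scal b A) = scal (a * b) A"
  by (simp add: scal_def fun_eq_iff)
lemma scal_add_left: "scal (a + b) A = scal a A + scal b A"
  by (simp add: scal_def fun_eq_iff distrib_right)
lemma scal_apply: "scal c A x y = c * A x y"
  by (simp add: scal_def)

lemma mmul_sum_list_left:
  "mmul I (sum_list (map f xs)) B = sum_list (map (\<lambda>x. mmul I (f x) B) xs)"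
  by (induction xs) (simp_all only: list.map sum_list.Cons sum_list.Nil mmul_lin)
lemma mmul_sum_list_right:
  "mmul I B (sum_list (map f xs)) = sum_list (map (\<lambda>x. mmul I B (f x)) xs)"
  by (induction xs) (simp_all only: list.map sum_list.Cons sum_list.Nil mmul_lin)
lemma scal_sum_list:
  "scal c (sum_list (map f xs)) = sum_list (map (\<lambda>x. scal c (f x)) xs)"
  by (induction xs) (simp_all only: list.map sum_list.Cons sum_list.Nil scal_zero scal_add)

lemma tensor_apply [simp]: "tensor A M (x, s) (y, t) = A x y * M s t"
  by (simp add: tensor_def)

lemma pair_fun_eq:
  fixes F G :: "'a \<times> 'b \<Rightarrow> 'c \<times> 'd \<Rightarrow> 'e"
  assumes "\<And>x s y t. F (x, s) (y, t) = G (x, s) (y, t)"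
  shows "F = G"
proof (intro ext)
  fix u v
  show "F u v = G u v" by (cases u; cases v) (simp add: assms)
qed

lemma tensor_add_left: "tensor (A + B) M = tensor A M + tensor B M"
  by (rule pair_fun_eq) (simp add: distrib_right)
lemma tensor_add_right: "tensor A (M + P) = tensor A M + tensor A P"
  by (rule pair_fun_eq) (simp add: distrib_left)
lemma tensor_diff_left: "tensor (A - B) M = tensor A M - tensor B M"
  by (rule pair_fun_eq) (simp add: left_diff_distrib)
lemma tensor_diff_right: "tensor A (M - P) = tensor A M - tensor A P"
  by (rule pair_fun_eq) (simp add: right_diff_distrib)
lemma tensor_minus_left: "tensor (- A) M = - tensor A M"
  by (rule pair_fun_eq) simp
lemma tensor_minus_right: "tensor A (- M) = - tensor A M"
  by (rule pair_fun_eq) simp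
lemma tensor_zero_left: "tensor 0 M = 0"
  by (rule pair_fun_eq) simp
lemma tensor_zero_right: "tensor A 0 = 0"
  by (rule pair_fun_eq) simp
lemma tensor_scal_left: "tensor (scal c A) M = scal c (tensor A M)"
  by (rule pair_fun_eq) (simp add: scal_def mult.assoc)
lemma tensor_scal_right: "tensor A (scal c M) = scal c (tensor A M)"
  by (rule pair_fun_eq) (simp add: scal_def mult_ac)

lemmas tensor_lin = tensor_add_left tensor_add_right tensor_diff_left tensor_diff_right
  tensor_minus_left tensor_minus_right tensor_zero_left tensor_zero_right
  tensor_scal_left tensor_scal_right

lemma tensor_mmul:
  assumes "finite I" "finite J"
  shows "mmul (I \<times> J) (tensor A M) (tensor B P) = tensor (mmul I A B) (mmul J M P)"
proof (rule pair_fun_eq)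
  fix x s y t
  have "mmul (I \<times> J) (tensor A M) (tensor B P) (x, s) (y, t)
      = (\<Sum>(z, u)\<in>I \<times> J. A x z * M s u * (B z y * P u t))"
    by (simp add: mmul_def case_prod_unfold tensor_def)
  also have "\<dots> = (\<Sum>z\<in>I. \<Sum>u\<in>J. A x z * B z y * (M s u * P u t))"
    by (simp add: sum.cartesian_product mult_ac)
  also have "\<dots> = tensor (mmul I A B) (mmul J M P) (x, s) (y, t)"
    by (simp add: mmul_def sum_product)
  finally show "mmul (I \<times> J) (tensor A M) (tensor B P) (x, s) (y, t)
      = tensor (mmul I A B) (mmul J M P) (x, s) (y, t)" .
qed

lemma finite_KI: "finite (KI N)"
proof -
  have "KI N \<subseteq> {..N} \<times> {..N}" by (auto simp: KI_def)
  then show ?thesis by (rule finite_subset) simp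
qed

lemma finite_HI: "finite (HI N)"
  by (simp add: HI_def finite_KI)

lemma sig_ss:
  "mmul {0,1} (sigma 1) (sigma 1) = - one2"
  "mmul {0,1} (sigma 2) (sigma 2) = - one2"
  "mmul {0,1} (sigma 3) (sigma 3) = - one2"
  "mmul {0,1} (sigma 1) (sigma 2) = - sigma 3"
  "mmul {0,1} (sigma 2) (sigma 1) = sigma 3"
  "mmul {0,1} (sigma 2) (sigma 3) = - sigma 1"
  "mmul {0,1} (sigma 3) (sigma 2) = sigma 1"
  "mmul {0,1} (sigma 3) (sigma 1) = - sigma 2"
  "mmul {0,1} (sigma 1) (sigma 3) = sigma 2"
  by (auto simp: fun_eq_iff mmul_def sigma_def tau_def scal_def one2_def)

lemma sig_one:
  "mmul {0,1} one2 (sigma k) = sigma k"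
  "mmul {0,1} (sigma k) one2 = sigma k"
  "mmul {0,1} one2 one2 = one2"
  by (auto simp: fun_eq_iff mmul_def sigma_def tau_def scal_def one2_def)

section \<open>su(2) commutation relations\<close>

definition Up :: "nat \<Rightarrow> nat mop" where
  "Up n = (\<lambda>a b. if a = Suc b \<and> a \<le> n then cc n b else 0)"
definition Dw :: "nat \<Rightarrow> nat mop" where
  "Dw n = (\<lambda>a b. if b = Suc a \<and> b \<le> n then cc n a else 0)"
definition Hm :: "nat \<Rightarrow> nat mop" where
  "Hm n = (\<lambda>a b. if a = b \<and> a \<le> n then complex_of_real (real a - real n / 2) else 0)"

lemma rho1: "rho n 1 = scal (- \<i> / 2) (Up n + Dw n)"
  by (auto simp: fun_eq_iff rho_def Up_def Dw_def scal_def)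
lemma rho2: "rho n 2 = scal (1 / 2) (Dw n - Up n)"
  by (auto simp: fun_eq_iff rho_def Up_def Dw_def scal_def)
lemma rho3: "rho n 3 = scal (- \<i>) (Hm n)"
  by (auto simp: fun_eq_iff rho_def Hm_def scal_def)

lemma cc_sq: "cc n i * cc n i = of_nat ((i + 1) * (n - i))"
proof -
  define r where "r = real ((i + 1) * (n - i))"
  have "cc n i * cc n i = complex_of_real (sqrt r * sqrt r)"
    by (simp only: cc_def r_def of_real_mult)
  also have "sqrt r * sqrt r = r" by (simp add: r_def)
  finally show ?thesis by (simp add: r_def)
qed

lemma cc_n: "cc n n = 0"
  by (simp add: cc_def)

lemma sum_single:
  assumes "finite S" "c \<in> S" "\<And>z. z \<in> S \<Longrightarrow> z \<noteq> c \<Longrightarrow> f z = 0"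
  shows "sum f S = f c"
proof -
  have "sum f S = f c + sum f (S - {c})" using assms(1,2) by (rule sum.remove)
  also have "sum f (S - {c}) = 0" using assms(3) by (intro sum.neutral) auto
  finally show ?thesis by simp
qed

definition hh :: "nat \<Rightarrow> nat \<Rightarrow> complex" where
  "hh n a = complex_of_real (real a - real n / 2)"

lemma Hm_left: "mmul {..n} (Hm n) B a b = (if a \<le> n then hh n a * B a b else 0)"
proof (cases "a \<le> n")
  case True
  then show ?thesis unfolding mmul_def
    by (subst sum_single[where c = a]) (auto simp: Hm_def hh_def)
next
  case False
  then show ?thesis unfolding mmul_def by (auto simp: Hm_def intro!: sum.neutral)
qed

lemma Hm_right: "mmul {..n} B (Hm n) a b = (if b \<le> n then B a b * hh n b else 0)"
proof (cases "b \<le> n")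
  case True
  then show ?thesis unfolding mmul_def
    by (subst sum_single[where c = b]) (auto simp: Hm_def hh_def)
next
  case False
  then show ?thesis unfolding mmul_def by (auto simp: Hm_def intro!: sum.neutral)
qed

lemma Up_left: "mmul {..n} (Up n) B a b = (if 0 < a \<and> a \<le> n then cc n (a - 1) * B (a - 1) b else 0)"
proof (cases "0 < a \<and> a \<le> n")
  case True
  then show ?thesis unfolding mmul_def
    by (subst sum_single[where c = "a - 1"]) (auto simp: Up_def)
next
  case False
  then show ?thesis unfolding mmul_def by (auto simp: Up_def intro!: sum.neutral)
qed

lemma Dw_left: "mmul {..n} (Dw n) B a b = (if a + 1 \<le> n then cc n a * B (a + 1) b else 0)"
proof (cases "a + 1 \<le> n")
  case True
  then show ?thesis unfolding mmul_def
    by (subst sum_single[where c = "a + 1"]) (auto simp: Dw_def)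
next
  case False
  then show ?thesis unfolding mmul_def by (auto simp: Dw_def intro!: sum.neutral)
qed

lemma HU: "mmul {..n} (Hm n) (Up n) - mmul {..n} (Up n) (Hm n) = Up n"
proof (intro ext)
  fix a b
  show "(mmul {..n} (Hm n) (Up n) - mmul {..n} (Up n) (Hm n)) a b = Up n a b"
    by (auto simp: Hm_left Hm_right Up_def hh_def algebra_simps)
qed

lemma HD: "mmul {..n} (Hm n) (Dw n) - mmul {..n} (Dw n) (Hm n) = - Dw n"
proof (intro ext)
  fix a b
  show "(mmul {..n} (Hm n) (Dw n) - mmul {..n} (Dw n) (Hm n)) a b = (- Dw n) a b"
    by (auto simp: Hm_left Hm_right Dw_def hh_def algebra_simps)
qed

lemma UD: "mmul {..n} (Up n) (Dw n) - mmul {..n} (Dw n) (Up n) = scal 2 (Hm n)"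
proof (intro ext)
  fix a b
  show "(mmul {..n} (Up n) (Dw n) - mmul {..n} (Dw n) (Up n)) a b = scal 2 (Hm n) a b"
  proof (cases "a = b \<and> a \<le> n")
    case True
    then obtain d where d: "n = a + d" "b = a" by (metis le_add_diff_inverse)
    show ?thesis
    proof (cases a)
      case 0
      then show ?thesis using d cc_sq[of n 0]
        apply (simp only: fun_diff_def Up_left Dw_left)
        by (auto simp: Up_def Dw_def Hm_def scal_def cc_n algebra_simps)
    next
      case (Suc a')
      have e1: "cc n a' * cc n a' = of_nat ((a' + 1) * (d + 1))" using d Suc by (simp add: cc_sq)
      have e2: "cc n a * cc n a = of_nat ((a + 1) * d)" using d by (simp add: cc_sq)
      show ?thesis using d Suc e1 e2
        apply (simp only: fun_diff_def Up_left Dw_left)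
        by (cases d) (auto simp: Up_def Dw_def Hm_def scal_def cc_n algebra_simps)
    qed
  next
    case False
    then show ?thesis
      apply (simp only: fun_diff_def Up_left Dw_left)
      by (auto simp: Up_def Dw_def Hm_def scal_def)
  qed
qed

lemma UD_pt: "mmul {..n} (Up n) (Dw n) a b = mmul {..n} (Dw n) (Up n) a b + 2 * Hm n a b"
  using fun_cong[OF fun_cong[OF UD[of n], of a], of b] by (simp add: scal_def algebra_simps)
lemma HU_pt: "mmul {..n} (Hm n) (Up n) a b = mmul {..n} (Up n) (Hm n) a b + Up n a b"
  using fun_cong[OF fun_cong[OF HU[of n], of a], of b] by (simp add: algebra_simps)
lemma HD_pt: "mmul {..n} (Hm n) (Dw n) a b = mmul {..n} (Dw n) (Hm n) a b - Dw n a b"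
  using fun_cong[OF fun_cong[OF HD[of n], of a], of b] by (simp add: algebra_simps)

lemma rho12: "mmul {..n} (rho n 1) (rho n 2) - mmul {..n} (rho n 2) (rho n 1) = rho n 3"
  unfolding rho1 rho2 rho3
  by (simp add: mmul_lin scal_scal fun_eq_iff scal_apply UD_pt algebra_simps)
lemma rho23: "mmul {..n} (rho n 2) (rho n 3) - mmul {..n} (rho n 3) (rho n 2) = rho n 1"
  unfolding rho1 rho2 rho3
  by (simp add: mmul_lin scal_scal fun_eq_iff scal_apply HU_pt HD_pt algebra_simps)
lemma rho31: "mmul {..n} (rho n 3) (rho n 1) - mmul {..n} (rho n 1) (rho n 3) = rho n 2"
  unfolding rho1 rho2 rho3
  by (simp add: mmul_lin scal_scal fun_eq_iff scal_apply HU_pt HD_pt algebra_simps)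

lemma KI_Sigma: "KI N = Sigma {..N} (\<lambda>n. {..n})"
  by (auto simp: KI_def)

lemma mulK_blk:
  "mmul (KI N) (\<lambda>(n, i) (m, j). if n = m \<and> n \<le> N then F n i j else 0)
               (\<lambda>(n, i) (m, j). if n = m \<and> n \<le> N then G n i j else 0)
   = (\<lambda>(n, i) (m, j). if n = m \<and> n \<le> N then mmul {..n} (F n) (G n) i j else 0)"
proof (rule pair_fun_eq)
  fix n i m j
  have "mmul (KI N) (\<lambda>(n, i) (m, j). if n = m \<and> n \<le> N then F n i j else 0)
               (\<lambda>(n, i) (m, j). if n = m \<and> n \<le> N then G n i j else 0) (n, i) (m, j)
     = (\<Sum>p\<le>N. \<Sum>z\<le>p. (if n = p \<and> n \<le> N then F n i z else 0) * (if p = m \<and> p \<le> N then G p z j else 0))"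
    unfolding mmul_def KI_Sigma by (subst sum.Sigma) (auto intro!: sum.cong split: prod.splits)
  also have "\<dots> = (if n = m \<and> n \<le> N then mmul {..n} (F n) (G n) i j else 0)"
  proof (cases "n = m \<and> n \<le> N")
    case True
    then show ?thesis
      by (subst sum_single[where c = n]) (auto simp: mmul_def)
  next
    case False
    then show ?thesis by (auto intro!: sum.neutral)
  qed
  finally show "mmul (KI N) (\<lambda>(n, i) (m, j). if n = m \<and> n \<le> N then F n i j else 0)
               (\<lambda>(n, i) (m, j). if n = m \<and> n \<le> N then G n i j else 0) (n, i) (m, j)
     = (\<lambda>(n, i) (m, j). if n = m \<and> n \<le> N then mmul {..n} (F n) (G n) i j else 0) (n, i) (m, j)"
    by simp
qed

lemma XN_blk: "XN N k = (\<lambda>(n, i) (m, j). if n = m \<and> n \<le> N then rho n k i j else 0)"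
  by (simp add: XN_def)

lemma mulK_XN: "mmul (KI N) (XN N k) (XN N l)
   = (\<lambda>(n, i) (m, j). if n = m \<and> n \<le> N then mmul {..n} (rho n k) (rho n l) i j else 0)"
  unfolding XN_blk by (rule mulK_blk)

lemma XN12: "mmul (KI N) (XN N 1) (XN N 2) - mmul (KI N) (XN N 2) (XN N 1) = XN N 3"
  (is "?lhs = ?rhs")
proof (rule pair_fun_eq)
  fix n i m j
  show "?lhs (n, i) (m, j) = ?rhs (n, i) (m, j)"
    using fun_cong[OF fun_cong[OF rho12[of n], of i], of j] by (simp only: fun_diff_def mulK_XN) (auto simp: XN_def)
qed
lemma XN23: "mmul (KI N) (XN N 2) (XN N 3) - mmul (KI N) (XN N 3) (XN N 2) = XN N 1"
  (is "?lhs = ?rhs")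
proof (rule pair_fun_eq)
  fix n i m j
  show "?lhs (n, i) (m, j) = ?rhs (n, i) (m, j)"
    using fun_cong[OF fun_cong[OF rho23[of n], of i], of j] by (simp only: fun_diff_def mulK_XN) (auto simp: XN_def)
qed
lemma XN31: "mmul (KI N) (XN N 3) (XN N 1) - mmul (KI N) (XN N 1) (XN N 3) = XN N 2"
  (is "?lhs = ?rhs")
proof (rule pair_fun_eq)
  fix n i m j
  show "?lhs (n, i) (m, j) = ?rhs (n, i) (m, j)"
    using fun_cong[OF fun_cong[OF rho31[of n], of i], of j] by (simp only: fun_diff_def mulK_XN) (auto simp: XN_def)
qed

lemma DN_expand: "DN N = tensor (XN N 1) (sigma 1) + tensor (XN N 2) (sigma 2) + tensor (XN N 3) (sigma 3)"
  by (simp add: DN_def add.assoc)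

lemma tmul: "mmul (HI N) (tensor A M) (tensor B P) = tensor (mmul (KI N) A B) (mmul {0,1} M P)"
  by (simp add: HI_def tensor_mmul finite_KI)

definition Cas :: "nat \<Rightarrow> (nat \<times> nat) mop" where
  "Cas N = mmul (KI N) (XN N 1) (XN N 1) + mmul (KI N) (XN N 2) (XN N 2) + mmul (KI N) (XN N 3) (XN N 3)"

lemma DD: "mmul (HI N) (DN N) (DN N) = - DN N - tensor (Cas N) one2"
proof -
  have e3: "tensor (XN N 3) (sigma 3) = tensor (mmul (KI N) (XN N 1) (XN N 2)) (sigma 3) - tensor (mmul (KI N) (XN N 2) (XN N 1)) (sigma 3)"
    by (simp only: tensor_diff_left[symmetric] XN12)
  have e1: "tensor (XN N 1) (sigma 1) = tensor (mmul (KI N) (XN N 2) (XN N 3)) (sigma 1) - tensor (mmul (KI N) (XN N 3) (XN N 2)) (sigma 1)"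
    by (simp only: tensor_diff_left[symmetric] XN23)
  have e2: "tensor (XN N 2) (sigma 2) = tensor (mmul (KI N) (XN N 3) (XN N 1)) (sigma 2) - tensor (mmul (KI N) (XN N 1) (XN N 3)) (sigma 2)"
    by (simp only: tensor_diff_left[symmetric] XN31)
  show ?thesis
    unfolding DN_expand Cas_def
    apply (simp only: mmul_add_left mmul_add_right tmul sig_ss tensor_minus_right tensor_add_left)
    apply (subst e1, subst e2, subst e3)
    by (simp add: algebra_simps)
qed

definition cmT :: "nat \<Rightarrow> (nat \<times> nat) mop \<Rightarrow> (nat \<times> nat) mop \<Rightarrow> (nat \<times> nat) mop" where
  "cmT N T b = mmul (KI N) T b - mmul (KI N) b T"

lemma dD_expand: "dD N b = tensor (cmT N (XN N 1) b) (sigma 1) + tensor (cmT N (XN N 2) b) (sigma 2)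
   + tensor (cmT N (XN N 3) b) (sigma 3)"
  unfolding dD_def DN_expand emb_def cmT_def
  apply (simp only: mmul_add_left mmul_add_right tmul sig_one tensor_diff_left)
  by (simp add: algebra_simps)

lemma emb_tsig: "mmul (HI N) (emb a) (tensor B (sigma k)) = tensor (mmul (KI N) a B) (sigma k)"
  by (simp only: emb_def tmul sig_one)

lemma emb_dD: "mmul (HI N) (emb a) (dD N b) =
    tensor (mmul (KI N) a (cmT N (XN N 1) b)) (sigma 1)
  + tensor (mmul (KI N) a (cmT N (XN N 2) b)) (sigma 2)
  + tensor (mmul (KI N) a (cmT N (XN N 3) b)) (sigma 3)"
  unfolding dD_expand by (simp only: mmul_add_right emb_tsig)

lemma DD2: "mmul (HI N) (DN N) (mmul (HI N) (DN N) X) = - mmul (HI N) (DN N) X - mmul (HI N) (tensor (Cas N) one2) X"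
  by (simp add: mmul_assoc[symmetric] finite_HI DD mmul_lin)

lemma junk_pair:
  "mmul (HI N) (dD N a) (dD N b) =
     mmul (HI N) (DN N) (mmul (HI N) (emb a) (dD N b))
   + mmul (HI N) (mmul (HI N) (emb a) (dD N b)) (DN N)
   + mmul (HI N) (emb a) (dD N b)
   + tensor (mmul (KI N) a (cmT N (Cas N) b)) one2"
  unfolding dD_def cmT_def
  apply (simp only: mmul_lin mmul_assoc finite_HI DD DD2)
  apply (simp only: emb_def tmul sig_one mmul_lin tensor_lin)
  by (simp add: algebra_simps)

lemma junk_list:
  "sum_list (map (\<lambda>(a, b). mmul (HI N) (dD N a) (dD N b)) ps) =
     mmul (HI N) (DN N) (sum_list (map (\<lambda>(a, b). mmul (HI N) (emb a) (dD N b)) ps))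
   + mmul (HI N) (sum_list (map (\<lambda>(a, b). mmul (HI N) (emb a) (dD N b)) ps)) (DN N)
   + sum_list (map (\<lambda>(a, b). mmul (HI N) (emb a) (dD N b)) ps)
   + tensor (sum_list (map (\<lambda>(a, b). mmul (KI N) a (cmT N (Cas N) b)) ps)) one2"
proof (induction ps)
  case Nil
  then show ?case by (simp only: list.map sum_list.Nil mmul_zero_left mmul_zero_right tensor_zero_left add_0_right)
next
  case (Cons p ps)
  obtain a b where p: "p = (a, b)" by (cases p)
  show ?case
    unfolding p list.map sum_list.Cons prod.case Cons.IH junk_pair[of N a b]
    by (simp only: mmul_add_left mmul_add_right tensor_add_left) (simp add: algebra_simps)
qed

lemma J2_tensor: "\<omega> \<in> J2 N \<Longrightarrow> \<exists>M. \<omega> = tensor M one2"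
  unfolding J2_def using junk_list
  by (auto simp: mmul_zero_left mmul_zero_right)

lemma emb_scal: "emb (scal c a) = scal c (emb a)"
  by (simp add: emb_def tensor_scal_left)

lemma dD_scal: "dD N (scal c a) = scal c (dD N a)"
  by (simp add: dD_def emb_scal mmul_scal_left mmul_scal_right scal_diff)

lemma scal_m1: "scal (-1) A = - A"
  by (simp add: scal_def fun_eq_iff)

lemma AN_scal: "a \<in> AN N \<Longrightarrow> scal c a \<in> AN N"
  by (auto simp: AN_def scal_def)

lemma J2_zero: "0 \<in> J2 N"
  unfolding J2_def by (rule CollectI, rule exI[of _ "[]"]) simp

lemma J2_add: "u \<in> J2 N \<Longrightarrow> v \<in> J2 N \<Longrightarrow> u + v \<in> J2 N"
  unfolding J2_def
proof (elim CollectE exE conjE, intro CollectI)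
  fix ps qs
  assume "\<forall>(a, b)\<in>set ps. a \<in> AN N \<and> b \<in> AN N"
    "sum_list (map (\<lambda>(a, b). mmul (HI N) (emb a) (dD N b)) ps) = 0"
    "u = sum_list (map (\<lambda>(a, b). mmul (HI N) (dD N a) (dD N b)) ps)"
    "\<forall>(a, b)\<in>set qs. a \<in> AN N \<and> b \<in> AN N"
    "sum_list (map (\<lambda>(a, b). mmul (HI N) (emb a) (dD N b)) qs) = 0"
    "v = sum_list (map (\<lambda>(a, b). mmul (HI N) (dD N a) (dD N b)) qs)"
  then show "\<exists>ps. (\<forall>(a, b)\<in>set ps. a \<in> AN N \<and> b \<in> AN N) \<and>
       sum_list (map (\<lambda>(a, b). mmul (HI N) (emb a) (dD N b)) ps) = 0 \<and>
       u + v = sum_list (map (\<lambda>(a, b). mmul (HI N) (dD N a) (dD N b)) ps)"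
    by (intro exI[of _ "ps @ qs"]) auto
qed

lemma J2_scal: "u \<in> J2 N \<Longrightarrow> scal c u \<in> J2 N"
  unfolding J2_def
proof (elim CollectE exE conjE, intro CollectI)
  fix ps
  assume a: "\<forall>(a, b)\<in>set ps. a \<in> AN N \<and> b \<in> AN N"
    "sum_list (map (\<lambda>(a, b). mmul (HI N) (emb a) (dD N b)) ps) = 0"
    "u = sum_list (map (\<lambda>(a, b). mmul (HI N) (dD N a) (dD N b)) ps)"
  let ?qs = "map (\<lambda>(a, b). (scal c a, b)) ps"
  have e1: "sum_list (map (\<lambda>(a, b). mmul (HI N) (emb a) (dD N b)) ?qs)
     = scal c (sum_list (map (\<lambda>(a, b). mmul (HI N) (emb a) (dD N b)) ps))"
    by (simp add: scal_sum_list comp_def case_prod_unfold emb_scal mmul_scal_left)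
  have e2: "sum_list (map (\<lambda>(a, b). mmul (HI N) (dD N a) (dD N b)) ?qs)
     = scal c (sum_list (map (\<lambda>(a, b). mmul (HI N) (dD N a) (dD N b)) ps))"
    by (simp add: scal_sum_list comp_def case_prod_unfold dD_scal mmul_scal_left)
  show "\<exists>ps. (\<forall>(a, b)\<in>set ps. a \<in> AN N \<and> b \<in> AN N) \<and>
       sum_list (map (\<lambda>(a, b). mmul (HI N) (emb a) (dD N b)) ps) = 0 \<and>
       scal c u = sum_list (map (\<lambda>(a, b). mmul (HI N) (dD N a) (dD N b)) ps)"
    apply (intro exI[of _ ?qs] conjI)
    subgoal using a(1) by (auto simp: AN_scal)
    subgoal by (simp only: e1 a(2) scal_zero)
    subgoal by (simp only: e2 a(3))
    done
qed

lemma J2_uminus: "u \<in> J2 N \<Longrightarrow> - u \<in> J2 N"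
  using J2_scal[of u N "-1"] by (simp add: scal_m1)

lemma J2_diff: "u \<in> J2 N \<Longrightarrow> v \<in> J2 N \<Longrightarrow> u - v \<in> J2 N"
  using J2_add[of u N "- v"] J2_uminus[of v N] by simp

lemma J2_sum: "finite S \<Longrightarrow> (\<And>i. i \<in> S \<Longrightarrow> f i \<in> J2 N) \<Longrightarrow> sum f S \<in> J2 N"
  by (induction S rule: finite_induct) (auto intro: J2_zero J2_add)

lemma atMost1: "{..Suc 0} = {0, Suc 0}" by auto
lemma atMost0: "{..0::nat} = {0}" by auto

lemma cc10: "cc (Suc 0) 0 = 1" by (simp add: cc_def)
lemma cc11: "cc (Suc 0) (Suc 0) = 0" by (simp add: cc_def)

lemma XN_vals:
  assumes "Suc 0 \<le> N"
  shows "XN N (Suc 0) (Suc 0,0) (Suc 0,0) = 0" "XN N 2 (Suc 0,0) (Suc 0,0) = 0" "XN N 3 (Suc 0,0) (Suc 0,0) = \<i> / 2"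
    "XN N (Suc 0) (Suc 0,Suc 0) (Suc 0,Suc 0) = 0" "XN N 2 (Suc 0,Suc 0) (Suc 0,Suc 0) = 0" "XN N 3 (Suc 0,Suc 0) (Suc 0,Suc 0) = - \<i> / 2"
    "XN N (Suc 0) (0,0) (0,0) = 0" "XN N 2 (0,0) (0,0) = 0" "XN N 3 (0,0) (0,0) = 0"
    "XN N (Suc 0) (Suc 0,0) (Suc 0,Suc 0) = - \<i> / 2" "XN N 2 (Suc 0,0) (Suc 0,Suc 0) = 1 / 2" "XN N 3 (Suc 0,0) (Suc 0,Suc 0) = 0"
    "XN N (Suc 0) (Suc 0,Suc 0) (Suc 0,0) = - \<i> / 2" "XN N 2 (Suc 0,Suc 0) (Suc 0,0) = - 1 / 2" "XN N 3 (Suc 0,Suc 0) (Suc 0,0) = 0"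
  using assms by (simp_all add: XN_def rho_def cc10)

lemma rho_sq_vals:
  "mmul {..1} (rho 1 k) (rho 1 k) 0 0 = (if k \<in> {1,2,3} then - 1 / 4 else 0)"
  "mmul {..1} (rho 1 k) (rho 1 k) 1 1 = (if k \<in> {1,2,3} then - 1 / 4 else 0)"
  "mmul {..0} (rho 0 k) (rho 0 k) 0 0 = 0"
  by (auto simp: mmul_def atMost1 atMost0 rho_def cc10 cc11 power2_eq_square)

lemma Cas_vals:
  assumes "Suc 0 \<le> N"
  shows "Cas N (Suc 0,0) (Suc 0,0) = - 3 / 4" "Cas N (Suc 0,Suc 0) (Suc 0,Suc 0) = - 3 / 4" "Cas N (0,0) (0,0) = 0"
  using assms by (simp_all add: Cas_def mulK_XN rho_sq_vals[simplified])

definition Em :: "nat \<times> nat \<Rightarrow> nat \<times> nat \<Rightarrow> (nat \<times> nat) mop" where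
  "Em x y = (\<lambda>u v. if u = x \<and> v = y then 1 else 0)"

lemma Em_left: "p \<in> KI N \<Longrightarrow> mmul (KI N) (Em x p) B = (\<lambda>u v. if u = x then B p v else 0)"
proof (intro ext)
  fix u v assume p: "p \<in> KI N"
  show "mmul (KI N) (Em x p) B u v = (if u = x then B p v else 0)"
  proof (cases "u = x")
    case True
    then show ?thesis unfolding mmul_def using p
      by (subst sum_single[where c = p]) (auto simp: Em_def finite_KI)
  next
    case False
    then show ?thesis unfolding mmul_def by (auto simp: Em_def intro!: sum.neutral)
  qed
qed

lemma Em_right: "q \<in> KI N \<Longrightarrow> mmul (KI N) B (Em q r) = (\<lambda>u v. if v = r then B u q else 0)"
proof (intro ext)
  fix u v assume q: "q \<in> KI N"
  show "mmul (KI N) B (Em q r) u v = (if v = r then B u q else 0)"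
  proof (cases "v = r")
    case True
    then show ?thesis unfolding mmul_def using q
      by (subst sum_single[where c = q]) (auto simp: Em_def finite_KI)
  next
    case False
    then show ?thesis unfolding mmul_def by (auto simp: Em_def intro!: sum.neutral)
  qed
qed

lemma Ecm:
  assumes "p \<in> KI N" "q \<in> KI N" "r \<in> KI N"
  shows "mmul (KI N) (Em x p) (cmT N T (Em q r))
    = scal (T p q) (Em x r) - (if p = q then mmul (KI N) (Em x r) T else 0)"
  unfolding cmT_def mmul_diff_right
  apply (simp only: Em_left Em_right assms)
  by (auto simp: fun_eq_iff scal_def Em_def)

lemma Em_AN: "x \<in> KI N \<Longrightarrow> y \<in> KI N \<Longrightarrow> Em x y \<in> AN N"
  by (auto simp: AN_def Em_def)

lemma KI_mem: "1 \<le> N \<Longrightarrow> (1, 0) \<in> KI N" "1 \<le> N \<Longrightarrow> (1, 1) \<in> KI N" "(0, 0) \<in> KI N"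
  by (auto simp: KI_def)

lemma Em_J2:
  assumes N: "1 \<le> N" and x: "x \<in> KI N" and y: "y \<in> KI N"
  shows "tensor (Em x y) one2 \<in> J2 N"
proof -
  have N': "Suc 0 \<le> N" using N by simp
  define c :: complex where "c = - 2 / 3"
  define ps where "ps = [(scal c (Em x (1,0)), Em (1,0) y), (scal c (Em x (1,1)), Em (1,1) y),
     (scal (-2*c) (Em x (0,0)), Em (0,0) y)]"
  have k1: "(1, 0) \<in> KI N" "(1, 1) \<in> KI N" "(0, 0) \<in> KI N" using KI_mem N by auto
  have mem: "\<forall>(a, b)\<in>set ps. a \<in> AN N \<and> b \<in> AN N"
    using k1 x y by (auto simp: ps_def Em_AN AN_scal)
  have G: "sum_list (map (\<lambda>(a, b). mmul (HI N) (emb a) (dD N b)) ps) = 0"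
    unfolding ps_def
    apply (simp only: list.map prod.case sum_list.Cons sum_list.Nil emb_scal mmul_scal_left emb_dD
        Ecm k1 x y if_True)
    apply (rule pair_fun_eq)
    by (simp add: scal_apply XN_vals[OF N'] fun_diff_def c_def algebra_simps)
  have K: "sum_list (map (\<lambda>(a, b). mmul (KI N) a (cmT N (Cas N) b)) ps) = Em x y"
    unfolding ps_def
    apply (simp only: list.map prod.case sum_list.Cons sum_list.Nil mmul_scal_left Ecm k1 x y if_True)
    by (simp add: fun_eq_iff scal_apply Cas_vals[OF N'] fun_diff_def c_def algebra_simps Em_def)
  show ?thesis
    unfolding J2_def
    apply (rule CollectI, rule exI[of _ ps])
    using mem G K junk_list[of N ps]
    by (simp add: mmul_zero_left mmul_zero_right)
qed

lemma sum_fun_apply: "(sum f S) u = sum (\<lambda>i. f i u) S"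
  by (induction S rule: infinite_finite_induct) auto

lemma AN_decomp:
  assumes "a \<in> AN N"
  shows "a = (\<Sum>(x, y)\<in>KI N \<times> KI N. scal (a x y) (Em x y))"
proof (intro ext)
  fix u v
  show "a u v = (\<Sum>(x, y)\<in>KI N \<times> KI N. scal (a x y) (Em x y)) u v"
  proof (cases "(u, v) \<in> KI N \<times> KI N")
    case True
    then show ?thesis
      unfolding sum_fun_apply
      by (subst sum_single[where c = "(u, v)"]) (auto simp: finite_KI scal_def Em_def split: if_splits)
  next
    case False
    then have "a u v = 0" using assms unfolding AN_def by blast
    then show ?thesis using False
      unfolding sum_fun_apply
      by (auto simp: scal_def Em_def intro!: sum.neutral)
  qed
qed

lemma tensor_sum_left: "tensor (sum f S) M = sum (\<lambda>i. tensor (f i) M) S"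
proof (induction S rule: infinite_finite_induct)
  case (infinite A)
  then show ?case by (metis sum.infinite tensor_zero_left)
next
  case empty
  then show ?case by (simp only: sum.empty tensor_zero_left)
next
  case (insert x F)
  show ?case by (simp only: sum.insert[OF insert.hyps(1,2)] tensor_add_left insert.IH)
qed

lemma one_J2:
  assumes N: "1 \<le> N" and a: "a \<in> AN N"
  shows "tensor a one2 \<in> J2 N"
proof -
  have "tensor a one2 = (\<Sum>(x, y)\<in>KI N \<times> KI N. scal (a x y) (tensor (Em x y) one2))"
    by (subst AN_decomp[OF a]) (simp add: tensor_sum_left case_prod_unfold tensor_scal_left)
  also have "\<dots> \<in> J2 N"
    by (rule J2_sum) (auto simp: finite_KI intro!: J2_scal Em_J2 N)
  finally show ?thesis .
qed

lemma SN_zero: "0 \<in> SN N"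
  unfolding SN_def by (rule CollectI, rule exI[of _ "[]"]) simp

lemma SN_add: "u \<in> SN N \<Longrightarrow> v \<in> SN N \<Longrightarrow> u + v \<in> SN N"
  unfolding SN_def
proof (elim CollectE exE conjE, intro CollectI)
  fix ps qs :: "(complex \<times> (nat \<times> nat) mop \<times> (nat \<times> nat) mop \<times> (nat \<times> nat) mop) list"
  assume "\<forall>(c, a0, a1, a2)\<in>set ps. a0 \<in> AN N \<and> a1 \<in> AN N \<and> a2 \<in> AN N"
    "u = sum_list (map (\<lambda>(c, a0, a1, a2). scal c (mmul (HI N) (mmul (HI N) (emb a0) (dD N a1)) (dD N a2))) ps)"
    "\<forall>(c, a0, a1, a2)\<in>set qs. a0 \<in> AN N \<and> a1 \<in> AN N \<and> a2 \<in> AN N"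
    "v = sum_list (map (\<lambda>(c, a0, a1, a2). scal c (mmul (HI N) (mmul (HI N) (emb a0) (dD N a1)) (dD N a2))) qs)"
  then show "\<exists>ts :: (complex \<times> (nat \<times> nat) mop \<times> (nat \<times> nat) mop \<times> (nat \<times> nat) mop) list.
      (\<forall>(c, a0, a1, a2)\<in>set ts. a0 \<in> AN N \<and> a1 \<in> AN N \<and> a2 \<in> AN N) \<and>
       u + v = sum_list (map (\<lambda>(c, a0, a1, a2). scal c (mmul (HI N) (mmul (HI N) (emb a0) (dD N a1)) (dD N a2))) ts)"
    by (intro exI[of _ "ps @ qs"]) auto
qed

lemma SN_scal: "u \<in> SN N \<Longrightarrow> scal c u \<in> SN N"
  unfolding SN_def
proof (elim CollectE exE conjE, intro CollectI)
  fix ps :: "(complex \<times> (nat \<times> nat) mop \<times> (nat \<times> nat) mop \<times> (nat \<times> nat) mop) list"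
  assume a: "\<forall>(c, a0, a1, a2)\<in>set ps. a0 \<in> AN N \<and> a1 \<in> AN N \<and> a2 \<in> AN N"
    "u = sum_list (map (\<lambda>(c, a0, a1, a2). scal c (mmul (HI N) (mmul (HI N) (emb a0) (dD N a1)) (dD N a2))) ps)"
  let ?qs = "map (\<lambda>(d, a0, a1, a2). (c * d, a0, a1, a2)) ps"
  have e: "sum_list (map (\<lambda>(c, a0, a1, a2). scal c (mmul (HI N) (mmul (HI N) (emb a0) (dD N a1)) (dD N a2))) ?qs)
     = scal c (sum_list (map (\<lambda>(c, a0, a1, a2). scal c (mmul (HI N) (mmul (HI N) (emb a0) (dD N a1)) (dD N a2))) ps))"
    by (simp add: scal_sum_list comp_def case_prod_unfold scal_scal)
  show "\<exists>ts :: (complex \<times> (nat \<times> nat) mop \<times> (nat \<times> nat) mop \<times> (nat \<times> nat) mop) list.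
      (\<forall>(c, a0, a1, a2)\<in>set ts. a0 \<in> AN N \<and> a1 \<in> AN N \<and> a2 \<in> AN N) \<and>
       scal c u = sum_list (map (\<lambda>(c, a0, a1, a2). scal c (mmul (HI N) (mmul (HI N) (emb a0) (dD N a1)) (dD N a2))) ts)"
    apply (intro exI[of _ ?qs] conjI)
    subgoal using a(1) by auto
    subgoal by (simp only: e a(2))
    done
qed

lemma SN_sum: "finite S \<Longrightarrow> (\<And>i. i \<in> S \<Longrightarrow> f i \<in> SN N) \<Longrightarrow> sum f S \<in> SN N"
  by (induction S rule: finite_induct) (auto intro: SN_zero SN_add)

lemma triple:
  "mmul (HI N) (mmul (HI N) (emb a) (dD N b)) (dD N c) =
     tensor (mmul (KI N) (mmul (KI N) a (cmT N (XN N 1) b)) (cmT N (XN N 1) c)) (- one2)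
   + tensor (mmul (KI N) (mmul (KI N) a (cmT N (XN N 1) b)) (cmT N (XN N 2) c)) (- sigma 3)
   + tensor (mmul (KI N) (mmul (KI N) a (cmT N (XN N 1) b)) (cmT N (XN N 3) c)) (sigma 2)
   + tensor (mmul (KI N) (mmul (KI N) a (cmT N (XN N 2) b)) (cmT N (XN N 1) c)) (sigma 3)
   + tensor (mmul (KI N) (mmul (KI N) a (cmT N (XN N 2) b)) (cmT N (XN N 2) c)) (- one2)
   + tensor (mmul (KI N) (mmul (KI N) a (cmT N (XN N 2) b)) (cmT N (XN N 3) c)) (- sigma 1)
   + tensor (mmul (KI N) (mmul (KI N) a (cmT N (XN N 3) b)) (cmT N (XN N 1) c)) (- sigma 2)
   + tensor (mmul (KI N) (mmul (KI N) a (cmT N (XN N 3) b)) (cmT N (XN N 2) c)) (sigma 1)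
   + tensor (mmul (KI N) (mmul (KI N) a (cmT N (XN N 3) b)) (cmT N (XN N 3) c)) (- one2)"
  unfolding emb_dD dD_expand[of N c]
  apply (simp only: mmul_add_left mmul_add_right tmul sig_ss)
  by (simp only: add_ac)

lemma neqP: "(1::nat, 0::nat) \<noteq> (1, 1)" "(1::nat, 1::nat) \<noteq> (1, 0)" by auto

lemma SN_list:
  assumes "\<forall>(c, a0, a1, a2)\<in>set ts. a0 \<in> AN N \<and> a1 \<in> AN N \<and> a2 \<in> AN N"
    "sum_list (map (\<lambda>(c, a0, a1, a2). scal c (mmul (HI N) (mmul (HI N) (emb a0) (dD N a1)) (dD N a2))) ts) = w"
  shows "w \<in> SN N"
  unfolding SN_def using assms by blast

lemma S_sig12:
  assumes N: "1 \<le> N" and x: "x \<in> KI N" and y: "y \<in> KI N"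
  shows "tensor (Em x y) (mmul {0,1} (sigma 1) (sigma 2)) \<in> SN N"
proof -
  have N': "Suc 0 \<le> N" using N by simp
  have k1: "(1, 0) \<in> KI N" "(1, 1) \<in> KI N" using KI_mem N by auto
  define ts where "ts = [(\<i>, Em x (1,1), Em (1,0) (1,0), Em (1,1) y), (- \<i>, Em x (1,0), Em (1,1) (1,1), Em (1,0) y)]"
  show ?thesis
  proof (rule SN_list[of ts])
    show "\<forall>(c, a0, a1, a2)\<in>set ts. a0 \<in> AN N \<and> a1 \<in> AN N \<and> a2 \<in> AN N"
      using k1 x y by (auto simp: ts_def Em_AN)
    show "sum_list (map (\<lambda>(c, a0, a1, a2). scal c (mmul (HI N) (mmul (HI N) (emb a0) (dD N a1)) (dD N a2))) ts)
      = tensor (Em x y) (mmul {0,1} (sigma 1) (sigma 2))"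
      unfolding ts_def
      apply (simp only: list.map prod.case sum_list.Cons sum_list.Nil triple mmul_scal_left mmul_diff_left
          mmul_zero_left Ecm k1 x y neqP if_True if_False simp_thms sig_ss)
      apply (rule pair_fun_eq)
      by (simp add: scal_apply XN_vals[OF N'] algebra_simps)
  qed
qed

lemma S_sig23:
  assumes N: "1 \<le> N" and x: "x \<in> KI N" and y: "y \<in> KI N"
  shows "tensor (Em x y) (mmul {0,1} (sigma 2) (sigma 3)) \<in> SN N"
proof -
  have N': "Suc 0 \<le> N" using N by simp
  have k1: "(1, 0) \<in> KI N" "(1, 1) \<in> KI N" using KI_mem N by auto
  define ts where "ts = [(\<i>, Em x (1,0), Em (1,0) (1,0), Em (1,1) y), (- \<i>, Em x (1,1), Em (1,1) (1,0), Em (1,1) y),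
     (- \<i>, Em x (1,0), Em (1,0) (1,1), Em (1,0) y), (\<i>, Em x (1,1), Em (1,1) (1,1), Em (1,0) y)]"
  show ?thesis
  proof (rule SN_list[of ts])
    show "\<forall>(c, a0, a1, a2)\<in>set ts. a0 \<in> AN N \<and> a1 \<in> AN N \<and> a2 \<in> AN N"
      using k1 x y by (auto simp: ts_def Em_AN)
    show "sum_list (map (\<lambda>(c, a0, a1, a2). scal c (mmul (HI N) (mmul (HI N) (emb a0) (dD N a1)) (dD N a2))) ts)
      = tensor (Em x y) (mmul {0,1} (sigma 2) (sigma 3))"
      unfolding ts_def
      apply (simp only: list.map prod.case sum_list.Cons sum_list.Nil triple mmul_scal_left mmul_diff_left
          mmul_zero_left Ecm k1 x y neqP if_True if_False simp_thms sig_ss)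
      apply (rule pair_fun_eq)
      by (simp add: scal_apply XN_vals[OF N'] algebra_simps)
  qed
qed

lemma S_sig13:
  assumes N: "1 \<le> N" and x: "x \<in> KI N" and y: "y \<in> KI N"
  shows "tensor (Em x y) (mmul {0,1} (sigma 1) (sigma 3)) \<in> SN N"
proof -
  have N': "Suc 0 \<le> N" using N by simp
  have k1: "(1, 0) \<in> KI N" "(1, 1) \<in> KI N" using KI_mem N by auto
  define ts where "ts = [(-1::complex, Em x (1,0), Em (1,0) (1,0), Em (1,1) y), (1, Em x (1,1), Em (1,1) (1,0), Em (1,1) y),
     (-1, Em x (1,0), Em (1,0) (1,1), Em (1,0) y), (1, Em x (1,1), Em (1,1) (1,1), Em (1,0) y)]"
  show ?thesis
  proof (rule SN_list[of ts])
    show "\<forall>(c, a0, a1, a2)\<in>set ts. a0 \<in> AN N \<and> a1 \<in> AN N \<and> a2 \<in> AN N"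
      using k1 x y by (auto simp: ts_def Em_AN)
    show "sum_list (map (\<lambda>(c, a0, a1, a2). scal c (mmul (HI N) (mmul (HI N) (emb a0) (dD N a1)) (dD N a2))) ts)
      = tensor (Em x y) (mmul {0,1} (sigma 1) (sigma 3))"
      unfolding ts_def
      apply (simp only: list.map prod.case sum_list.Cons sum_list.Nil triple mmul_scal_left mmul_diff_left
          mmul_zero_left Ecm k1 x y neqP if_True if_False simp_thms sig_ss)
      apply (rule pair_fun_eq)
      by (simp add: scal_apply XN_vals[OF N'] algebra_simps)
  qed
qed

lemma AN_zero: "0 \<in> AN N" by (simp add: AN_def)
lemma AN_add: "A \<in> AN N \<Longrightarrow> B \<in> AN N \<Longrightarrow> A + B \<in> AN N"
  by (auto simp: AN_def) (metis add.right_neutral)+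
lemma AN_uminus: "A \<in> AN N \<Longrightarrow> - A \<in> AN N"
  by (auto simp: AN_def)
lemma AN_diff: "A \<in> AN N \<Longrightarrow> B \<in> AN N \<Longrightarrow> A - B \<in> AN N"
  using AN_add[of A N "- B"] AN_uminus[of B N] by simp
lemma AN_mmul: "A \<in> AN N \<Longrightarrow> B \<in> AN N \<Longrightarrow> mmul (KI N) A B \<in> AN N"
proof -
  assume A: "A \<in> AN N" and B: "B \<in> AN N"
  show ?thesis unfolding AN_def mem_Collect_eq
  proof (intro allI impI)
    fix x y assume "mmul (KI N) A B x y \<noteq> 0"
    then obtain z where "A x z * B z y \<noteq> 0" unfolding mmul_def by (meson sum.neutral)
    then have "A x z \<noteq> 0" "B z y \<noteq> 0" by auto
    then show "x \<in> KI N \<and> y \<in> KI N" using A B unfolding AN_def mem_Collect_eq by blast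
  qed
qed
lemma XN_AN: "XN N k \<in> AN N"
  by (auto simp: AN_def XN_def KI_def rho_def split: if_splits)
lemma cmT_AN: "T \<in> AN N \<Longrightarrow> b \<in> AN N \<Longrightarrow> cmT N T b \<in> AN N"
  by (simp add: cmT_def AN_diff AN_mmul)

definition RR :: "nat \<Rightarrow> ((nat \<times> nat) \<times> nat) mop set" where
  "RR N = {tensor \<alpha> (sigma 1) + tensor \<beta> (sigma 2) + tensor \<gamma> (sigma 3) + tensor \<delta> one2 | \<alpha> \<beta> \<gamma> \<delta>.
     \<alpha> \<in> AN N \<and> \<beta> \<in> AN N \<and> \<gamma> \<in> AN N \<and> \<delta> \<in> AN N}"

lemma RR_zero: "0 \<in> RR N"
  unfolding RR_def
  by (rule CollectI, rule exI[of _ 0], rule exI[of _ 0], rule exI[of _ 0], rule exI[of _ 0])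
     (simp add: tensor_zero_left AN_zero)

lemma RR_add: "u \<in> RR N \<Longrightarrow> v \<in> RR N \<Longrightarrow> u + v \<in> RR N"
proof -
  assume "u \<in> RR N" "v \<in> RR N"
  then obtain a1 b1 c1 d1 a2 b2 c2 d2 where
    u: "u = tensor a1 (sigma 1) + tensor b1 (sigma 2) + tensor c1 (sigma 3) + tensor d1 one2"
      "a1 \<in> AN N" "b1 \<in> AN N" "c1 \<in> AN N" "d1 \<in> AN N" and
    v: "v = tensor a2 (sigma 1) + tensor b2 (sigma 2) + tensor c2 (sigma 3) + tensor d2 one2"
      "a2 \<in> AN N" "b2 \<in> AN N" "c2 \<in> AN N" "d2 \<in> AN N"
    unfolding RR_def by blast
  have "u + v = tensor (a1 + a2) (sigma 1) + tensor (b1 + b2) (sigma 2) + tensor (c1 + c2) (sigma 3)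
      + tensor (d1 + d2) one2"
    unfolding u v tensor_add_left by (simp add: algebra_simps)
  then show ?thesis unfolding RR_def using u v by (blast intro: AN_add)
qed

lemma RR_scal: "u \<in> RR N \<Longrightarrow> scal c u \<in> RR N"
proof -
  assume "u \<in> RR N"
  then obtain a1 b1 c1 d1 where
    u: "u = tensor a1 (sigma 1) + tensor b1 (sigma 2) + tensor c1 (sigma 3) + tensor d1 one2"
      "a1 \<in> AN N" "b1 \<in> AN N" "c1 \<in> AN N" "d1 \<in> AN N"
    unfolding RR_def by blast
  have "scal c u = tensor (scal c a1) (sigma 1) + tensor (scal c b1) (sigma 2) + tensor (scal c c1) (sigma 3)
      + tensor (scal c d1) one2"
    unfolding u by (simp only: scal_add tensor_scal_left)
  then show ?thesis unfolding RR_def using u by (blast intro: AN_scal)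
qed

lemma RR_basic:
  assumes "A \<in> AN N"
  shows "tensor A (sigma 1) \<in> RR N" "tensor A (sigma 2) \<in> RR N" "tensor A (sigma 3) \<in> RR N"
    "tensor A one2 \<in> RR N"
proof -
  have z: "0 \<in> AN N" by (rule AN_zero)
  show "tensor A (sigma 1) \<in> RR N" unfolding RR_def
    by (rule CollectI, rule exI[of _ A], rule exI[of _ 0], rule exI[of _ 0], rule exI[of _ 0])
      (simp add: tensor_zero_left assms z)
  show "tensor A (sigma 2) \<in> RR N" unfolding RR_def
    by (rule CollectI, rule exI[of _ 0], rule exI[of _ A], rule exI[of _ 0], rule exI[of _ 0])
      (simp add: tensor_zero_left assms z)
  show "tensor A (sigma 3) \<in> RR N" unfolding RR_def
    by (rule CollectI, rule exI[of _ 0], rule exI[of _ 0], rule exI[of _ A], rule exI[of _ 0])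
      (simp add: tensor_zero_left assms z)
  show "tensor A one2 \<in> RR N" unfolding RR_def
    by (rule CollectI, rule exI[of _ 0], rule exI[of _ 0], rule exI[of _ 0], rule exI[of _ A])
      (simp add: tensor_zero_left assms z)
qed

lemma RR_uminus: "u \<in> RR N \<Longrightarrow> - u \<in> RR N"
  using RR_scal[of u N "-1"] by (simp add: scal_m1)

lemma triple_RR:
  assumes "a \<in> AN N" "b \<in> AN N" "c \<in> AN N"
  shows "mmul (HI N) (mmul (HI N) (emb a) (dD N b)) (dD N c) \<in> RR N"
proof -
  have T: "mmul (KI N) (mmul (KI N) a (cmT N (XN N k) b)) (cmT N (XN N l) c) \<in> AN N" for k l
    using assms by (simp add: AN_mmul cmT_AN XN_AN)
  show ?thesis
    unfolding triple tensor_minus_right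
    by (intro RR_add RR_uminus RR_basic T)
qed

lemma SN_RR: "s \<in> SN N \<Longrightarrow> s \<in> RR N"
proof -
  assume "s \<in> SN N"
  then obtain ts where ts: "\<forall>(c, a0, a1, a2) \<in> set ts. a0 \<in> AN N \<and> a1 \<in> AN N \<and> a2 \<in> AN N"
    and s: "s = sum_list (map (\<lambda>(c, a0, a1, a2).
             scal c (mmul (HI N) (mmul (HI N) (emb a0) (dD N a1)) (dD N a2))) ts)"
    unfolding SN_def by blast
  have "sum_list (map (\<lambda>(c, a0, a1, a2).
             scal c (mmul (HI N) (mmul (HI N) (emb a0) (dD N a1)) (dD N a2))) ts) \<in> RR N"
    using ts
  proof (induction ts)
    case Nil
    then show ?case by (simp only: list.map sum_list.Nil RR_zero)
  next
    case (Cons t ts)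
    obtain c a0 a1 a2 where t: "t = (c, a0, a1, a2)" by (cases t) auto
    show ?case using Cons.prems Cons.IH unfolding t
      by (simp only: list.map prod.case sum_list.Cons)
        (intro RR_add RR_scal triple_RR; auto)
  qed
  then show ?thesis using s by simp
qed

lemma tensor_AN_SN:
  assumes X: "X \<in> AN N" and E: "\<And>x y. x \<in> KI N \<Longrightarrow> y \<in> KI N \<Longrightarrow> tensor (Em x y) P \<in> SN N"
  shows "tensor X P \<in> SN N"
proof -
  have "tensor X P = (\<Sum>(x, y)\<in>KI N \<times> KI N. scal (X x y) (tensor (Em x y) P))"
    by (subst AN_decomp[OF X]) (simp add: tensor_sum_left case_prod_unfold tensor_scal_left)
  also have "\<dots> \<in> SN N"
    by (rule SN_sum) (auto simp: finite_KI intro!: SN_scal E)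
  finally show ?thesis .
qed

lemma WN_SN: "1 \<le> N \<Longrightarrow> WN N \<subseteq> SN N"
proof
  fix w assume N: "1 \<le> N" and "w \<in> WN N"
  then obtain X Y Z where w: "w = tensor X (mmul {0, 1} (sigma 1) (sigma 2))
           + tensor Y (mmul {0, 1} (sigma 2) (sigma 3))
           + tensor Z (mmul {0, 1} (sigma 1) (sigma 3))" "X \<in> AN N" "Y \<in> AN N" "Z \<in> AN N"
    unfolding WN_def by blast
  show "w \<in> SN N" unfolding w(1)
    by (intro SN_add tensor_AN_SN[OF w(2) S_sig12[OF N]] tensor_AN_SN[OF w(3) S_sig23[OF N]]
        tensor_AN_SN[OF w(4) S_sig13[OF N]])
qed

lemma W_zero:
  assumes eq: "tensor X (mmul {0, 1} (sigma 1) (sigma 2)) + tensor Y (mmul {0, 1} (sigma 2) (sigma 3))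
           + tensor Z (mmul {0, 1} (sigma 1) (sigma 3)) = tensor M one2"
  shows "X = 0 \<and> Y = 0 \<and> Z = 0"
proof -
  have e: "(tensor X (- sigma 3) + tensor Y (- sigma 1) + tensor Z (sigma 2)) (u, s) (v, t)
      = tensor M one2 (u, s) (v, t)" for u v s t
    using eq unfolding sig_ss by simp
  have "X u v = 0 \<and> Y u v = 0 \<and> Z u v = 0" for u v
    using e[of u 0 v 0] e[of u 1 v 1] e[of u 0 v 1] e[of u 1 v 0]
    by (simp add: sigma_def tau_def scal_def one2_def algebra_simps)
  then show ?thesis by (auto simp: fun_eq_iff)
qed

lemma qmap_mem: "s \<in> qmap N s"
  unfolding qmap_def using J2_zero by (metis add.right_neutral image_eqI)

lemma qmap_shift:
  assumes "j \<in> J2 N"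
  shows "qmap N (w + j) = qmap N w"
proof
  show "qmap N (w + j) \<subseteq> qmap N w"
    unfolding qmap_def
  proof
    fix z assume "z \<in> (\<lambda>j'. w + j + j') ` J2 N"
    then obtain j' where "j' \<in> J2 N" "z = w + j + j'" by blast
    then show "z \<in> (\<lambda>j'. w + j') ` J2 N"
      using assms J2_add by (metis add.assoc image_eqI)
  qed
  show "qmap N w \<subseteq> qmap N (w + j)"
    unfolding qmap_def
  proof
    fix z assume "z \<in> (\<lambda>j'. w + j') ` J2 N"
    then obtain j' where j': "j' \<in> J2 N" "z = w + j'" by blast
    have "z = w + j + (j' - j)" using j' by simp
    moreover have "j' - j \<in> J2 N" using j' assms J2_diff by blast
    ultimately show "z \<in> (\<lambda>j'. w + j + j') ` J2 N" by blast
  qed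
qed

theorem corollary8p4:
  fixes N :: nat
  assumes "N \<ge> 1"
  shows "WN N \<subseteq> SN N \<and> bij_betw (qmap N) (WN N) (Omega2 N)"
proof -
  have N: "1 \<le> N" using assms by simp
  have WS: "WN N \<subseteq> SN N" using WN_SN[OF N] .
  have inj: "inj_on (qmap N) (WN N)"
  proof (rule inj_onI)
    fix w1 w2 assume w1: "w1 \<in> WN N" and w2: "w2 \<in> WN N" and q: "qmap N w1 = qmap N w2"
    obtain X1 Y1 Z1 where W1: "w1 = tensor X1 (mmul {0, 1} (sigma 1) (sigma 2))
           + tensor Y1 (mmul {0, 1} (sigma 2) (sigma 3))
           + tensor Z1 (mmul {0, 1} (sigma 1) (sigma 3))"
      using w1 unfolding WN_def by blast
    obtain X2 Y2 Z2 where W2: "w2 = tensor X2 (mmul {0, 1} (sigma 1) (sigma 2))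
           + tensor Y2 (mmul {0, 1} (sigma 2) (sigma 3))
           + tensor Z2 (mmul {0, 1} (sigma 1) (sigma 3))"
      using w2 unfolding WN_def by blast
    have "w1 \<in> qmap N w2" using q qmap_mem[of w1 N] by simp
    then obtain j where j: "j \<in> J2 N" "w1 = w2 + j" unfolding qmap_def by blast
    obtain M where M: "j = tensor M one2" using J2_tensor[OF j(1)] by blast
    have "tensor (X1 - X2) (mmul {0, 1} (sigma 1) (sigma 2))
           + tensor (Y1 - Y2) (mmul {0, 1} (sigma 2) (sigma 3))
           + tensor (Z1 - Z2) (mmul {0, 1} (sigma 1) (sigma 3)) = tensor M one2"
      using j(2) unfolding M W1 W2 tensor_diff_left by (simp add: algebra_simps)
    then have "X1 - X2 = 0 \<and> Y1 - Y2 = 0 \<and> Z1 - Z2 = 0" by (rule W_zero)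
    then show "w1 = w2" unfolding W1 W2 by simp
  qed
  have img: "qmap N ` WN N = Omega2 N"
  proof
    show "qmap N ` WN N \<subseteq> Omega2 N" unfolding Omega2_def using WS by blast
    show "Omega2 N \<subseteq> qmap N ` WN N"
    proof
      fix q assume "q \<in> Omega2 N"
      then obtain s where s: "s \<in> SN N" "q = qmap N s" unfolding Omega2_def by blast
      have "s \<in> RR N" using SN_RR s(1) by blast
      then obtain a b c d where abcd:
        "s = tensor a (sigma 1) + tensor b (sigma 2) + tensor c (sigma 3) + tensor d one2"
        "a \<in> AN N" "b \<in> AN N" "c \<in> AN N" "d \<in> AN N"
        unfolding RR_def by blast
      define w where "w = tensor (- c) (mmul {0, 1} (sigma 1) (sigma 2))
           + tensor (- a) (mmul {0, 1} (sigma 2) (sigma 3))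
           + tensor b (mmul {0, 1} (sigma 1) (sigma 3))"
      have wW: "w \<in> WN N" unfolding w_def WN_def using abcd AN_uminus by blast
      have sw: "s = w + tensor d one2"
        unfolding abcd(1) w_def sig_ss tensor_minus_left tensor_minus_right by simp
      have "q = qmap N w" using s(2) sw qmap_shift[OF one_J2[OF N abcd(5)]] by simp
      then show "q \<in> qmap N ` WN N" using wW by blast
    qed
  qed
  show ?thesis using WS inj img by (simp add: bij_betw_def)
qed

end
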